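(* Let $v(0)\in\mathcal N^*$ and $T>0$. Let $v^{crit}$ be the solution of the critical equations with initial condition $v(0)$, and $v^{sub}$ the solution of the subcritical equations with initial condition $v(0)$ and a continuous rate function $\lambda$ bounded below by a positive constant. Then $$\int_0^T\Phi^{sub}(t)dt-\int_0^T\lambda(t)dt\le\int_0^T\Phi^{crit}(t)dt.$$ If $v^{alt}$ is the solution of the alternating equations with initial condition $v(0)$ and an arbitrary sequence of burning times, then $$\int_0^T\Phi^{alt}(t)dt\le\int_0^T\Phi^{crit}(t)dt.$$
   Context: $\mathcal N$: sequences $v=(v_k)_{k\ge1}$ of nonnegative reals with $\sum_kv_k<\infty$; $\mathcal N^*$: those with finitely many nonzero terms; $m_0=\sum_kv_k$. Subcritical equations with rate $\lambda$: $v(t)\in\mathcal N$, $v_k(t)=v_k(0)+\int_0^t\big(\tfrac k2\sum_{l=1}^{k-1}v_lv_{k-l}-kv_km_0(s)-\lambda(s)kv_k\big)ds$ for all $k$, with $\Phi(t)=m_0(0)-m_0(t)$ nondecreasing in $[0,m_0(0))$. Critical equations: the same with $\lambda\equiv0$. For these, $\Phi^{sub}(t)=m_0(0)-m^{sub}_0(t)$, $\Phi^{crit}(t)=m_0(0)-m^{crit}_0(t)$. Alternating equations with burning times $0=\beta_0<\beta_1<\dots$ (no accumulation), $M(t)=\max\{i:\beta_i<t\}$: $\dot v_k=\tfrac k2\sum_{l=1}^{k-1}v_lv_{k-l}-kv_km_0(\beta_{M(t)})$, $v_k$ continuous; $\Phi^{alt}(t)=m_0(0)-m^{alt}_0(\beta_{M(t)})$.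 *)

theory Defs
  imports "HOL-Analysis.Analysis"
begin

text \<open>Sequences v = (v_k)_{k \<ge> 1} are represented as functions nat \<Rightarrow> real;
  the value at index 0 is irrelevant and ignored.\<close>

definition in_N :: "(nat \<Rightarrow> real) \<Rightarrow> bool" where
  "in_N v \<longleftrightarrow> (\<forall>k\<ge>1. 0 \<le> v k) \<and> summable (\<lambda>k. v (Suc k))"

definition in_N_star :: "(nat \<Rightarrow> real) \<Rightarrow> bool" where
  "in_N_star v \<longleftrightarrow> in_N v \<and> finite {k. 1 \<le> k \<and> v k \<noteq> 0}"

definition m0 :: "(nat \<Rightarrow> real) \<Rightarrow> real" where
  "m0 v = (\<Sum>k. v (Suc k))"

definition coag :: "(nat \<Rightarrow> real) \<Rightarrow> nat \<Rightarrow> real" where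
  "coag v k = (real k / 2) * (\<Sum>l=1..k-1. v l * v (k - l))"

definition sub_sol :: "(real \<Rightarrow> real) \<Rightarrow> (nat \<Rightarrow> real) \<Rightarrow> (real \<Rightarrow> nat \<Rightarrow> real) \<Rightarrow> bool" where
  "sub_sol lam v0 v \<longleftrightarrow>
     v 0 = v0 \<and>
     (\<forall>t\<ge>0. in_N (v t)) \<and>
     (\<forall>k\<ge>1. \<forall>t\<ge>0.
        ((\<lambda>s. coag (v s) k - real k * v s k * m0 (v s) - lam s * real k * v s k)
           has_integral (v t k - v 0 k)) {0..t}) \<and>
     mono_on {0..} (\<lambda>t. m0 (v 0) - m0 (v t)) \<and>
     (\<forall>t\<ge>0. 0 \<le> m0 (v 0) - m0 (v t) \<and> m0 (v 0) - m0 (v t) < m0 (v 0))"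

definition crit_sol :: "(nat \<Rightarrow> real) \<Rightarrow> (real \<Rightarrow> nat \<Rightarrow> real) \<Rightarrow> bool" where
  "crit_sol v0 v \<longleftrightarrow> sub_sol (\<lambda>_. 0) v0 v"

definition Phi :: "(real \<Rightarrow> nat \<Rightarrow> real) \<Rightarrow> real \<Rightarrow> real" where
  "Phi v t = m0 (v 0) - m0 (v t)"

text \<open>Burning times: 0 = beta_0 < beta_1 < ..., without accumulation points.\<close>
definition burning_times :: "(nat \<Rightarrow> real) \<Rightarrow> bool" where
  "burning_times \<beta> \<longleftrightarrow> \<beta> 0 = 0 \<and> strict_mono \<beta> \<and> filterlim \<beta> at_top sequentially"

definition Mt :: "(nat \<Rightarrow> real) \<Rightarrow> real \<Rightarrow> nat" where
  "Mt \<beta> t = (GREATEST i. \<beta> i < t)"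

definition alt_sol :: "(nat \<Rightarrow> real) \<Rightarrow> (nat \<Rightarrow> real) \<Rightarrow> (real \<Rightarrow> nat \<Rightarrow> real) \<Rightarrow> bool" where
  "alt_sol \<beta> v0 v \<longleftrightarrow>
     v 0 = v0 \<and>
     (\<forall>t\<ge>0. in_N (v t)) \<and>
     (\<forall>k\<ge>1. continuous_on {0..} (\<lambda>t. v t k)) \<and>
     (\<forall>k\<ge>1. \<forall>t>0. t \<notin> range \<beta> \<longrightarrow>
        ((\<lambda>s. v s k) has_real_derivative
           (coag (v t) k - real k * v t k * m0 (v (\<beta> (Mt \<beta> t))))) (at t))"

definition Phi_alt :: "(nat \<Rightarrow> real) \<Rightarrow> (real \<Rightarrow> nat \<Rightarrow> real) \<Rightarrow> real \<Rightarrow> real" where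
  "Phi_alt \<beta> v t = m0 (v 0) - m0 (v (\<beta> (Mt \<beta> t)))"

end

theory Submission
  imports Defs
begin


lemma countable_deriv_zero_half:
  fixes f :: "real \<Rightarrow> real"
  assumes ab: "a \<le> b" and cf: "continuous_on {a..b} f" and cC: "countable C"
    and der: "\<And>x. x \<in> {a<..<b} - C \<Longrightarrow> (f has_real_derivative 0) (at x)"
  shows "f b \<le> f a"
proof (rule ccontr)
  assume "\<not> f b \<le> f a"
  hence lt: "f a < f b" by simp
  have ab': "a < b" using lt ab by (cases "a = b") auto
  define s where "s = (f b - f a) / (2 * (b - a))"
  have s0: "s > 0" using lt ab' by (simp add: s_def)
  define g where "g x = f x - f a - s * (x - a)" for x
  have ga: "g a = 0" by (simp add: g_def)
  have gb: "g b = (f b - f a) / 2" using ab' by (simp add: g_def s_def field_simps)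
  have cg: "continuous_on {a..b} g" unfolding g_def by (intro continuous_intros cf)
  have "uncountable {0<..<g b}" using gb lt by (simp add: uncountable_open_interval)
  hence "{0<..<g b} - g ` C \<noteq> {}" using cC
    by (metis countable_image Diff_eq_empty_iff countable_subset)
  then obtain y where y: "0 < y" "y < g b" "y \<notin> g ` C" by (metis (no_types, lifting) Diff_iff all_not_in_conv greaterThanLessThan_iff)
  define A where "A = {a..b} \<inter> g -` {..y}"
  have clA: "closed A" unfolding A_def by (rule continuous_closed_preimage[OF cg]) auto
  have aA: "a \<in> A" using ab ga y by (simp add: A_def)
  have bddA: "bdd_above A" unfolding A_def by (auto intro: bdd_aboveI[where M=b])
  define x0 where "x0 = Sup A"
  have x0A: "x0 \<in> A" unfolding x0_def using closed_contains_Sup[OF _ bddA clA] aA by auto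
  have right: "g x > y" if "x0 < x" "x \<le> b" for x
  proof (rule ccontr)
    assume "\<not> g x > y"
    hence "x \<in> A" using that x0A by (auto simp: A_def)
    hence "x \<le> x0" unfolding x0_def using bddA by (simp add: cSup_upper)
    thus False using that by simp
  qed
  have x0b: "x0 < b" using x0A y by (auto simp: A_def order.order_iff_strict)
  have gx0: "g x0 = y"
  proof (rule ccontr)
    assume "g x0 \<noteq> y"
    hence lt0: "g x0 < y" using x0A by (auto simp: A_def)
    have "continuous (at x0 within {a..b}) g" using cg x0A by (simp add: A_def continuous_on_eq_continuous_within)
    then obtain d where d: "d > 0" "\<And>x. x \<in> {a..b} \<Longrightarrow> dist x x0 < d \<Longrightarrow> dist (g x) (g x0) < y - g x0"
      using lt0 unfolding continuous_within_eps_delta by (metis diff_gt_0_iff_gt)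
    define x where "x = min b (x0 + d/2)"
    have "x0 < x" "x \<le> b" using x0b d by (auto simp: x_def)
    moreover have "x \<in> {a..b}" using x0A \<open>x0 < x\<close> \<open>x \<le> b\<close> by (auto simp: A_def)
    moreover have "dist x x0 < d" using \<open>x0 < x\<close> d by (auto simp: x_def dist_real_def)
    ultimately have "g x < y" using d(2)[of x] by (auto simp: dist_real_def)
    thus False using right[OF \<open>x0 < x\<close> \<open>x \<le> b\<close>] by simp
  qed
  have x0a: "a < x0" using gx0 ga y x0A by (auto simp: A_def order.order_iff_strict)
  have x0C: "x0 \<notin> C" using gx0 y(3) by auto
  have "(f has_real_derivative 0) (at x0)" using der x0a x0b x0C by auto
  hence gd: "(g has_real_derivative (- s)) (at x0)" unfolding g_def
    by (auto intro!: derivative_eq_intros)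
  then obtain d where d: "d > 0" "\<And>h. h > 0 \<Longrightarrow> h < d \<Longrightarrow> g x0 > g (x0 + h)"
    using DERIV_neg_dec_right[OF gd] s0 by auto
  define h where "h = min (d/2) (b - x0)"
  have "h > 0" "h < d" using d x0b by (auto simp: h_def)
  hence "g (x0 + h) < y" using d gx0 by auto
  moreover have "g (x0 + h) > y" using right[of "x0 + h"] \<open>h > 0\<close> by (auto simp: h_def)
  ultimately show False by simp
qed

lemma countable_deriv_zero_const:
  fixes f :: "real \<Rightarrow> real"
  assumes ab: "a \<le> b" and cf: "continuous_on {a..b} f" and cC: "countable C"
    and der: "\<And>x. x \<in> {a<..<b} - C \<Longrightarrow> (f has_real_derivative 0) (at x)"
  shows "f b = f a"
proof -
  have "f b \<le> f a" by (rule countable_deriv_zero_half[OF ab cf cC der])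
  moreover have "(\<lambda>x. - f x) b \<le> (\<lambda>x. - f x) a"
    by (rule countable_deriv_zero_half[OF ab _ cC])
      (use cf der in \<open>auto intro!: continuous_intros derivative_eq_intros\<close>)
  ultimately show ?thesis by simp
qed

lemma coag_cong:
  assumes "\<And>l. 1 \<le> l \<Longrightarrow> l < k \<Longrightarrow> v l = v' l"
  shows "coag v k = coag v' k"
  unfolding coag_def using assms by (intro arg_cong[where f="\<lambda>x. _ * x"] sum.cong) auto

lemma uniq_sol:
  fixes w w' :: "real \<Rightarrow> nat \<Rightarrow> real"
  assumes b: "0 \<le> b" and cC: "countable C"
    and cw: "\<And>k. 1 \<le> k \<Longrightarrow> continuous_on {0..b} (\<lambda>t. w t k)"
    and cw': "\<And>k. 1 \<le> k \<Longrightarrow> continuous_on {0..b} (\<lambda>t. w' t k)"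
    and w0: "\<And>k. 1 \<le> k \<Longrightarrow> w 0 k = w' 0 k"
    and dw: "\<And>k t. 1 \<le> k \<Longrightarrow> t \<in> {0<..<b} - C \<Longrightarrow> ((\<lambda>t. w t k) has_real_derivative coag (w t) k) (at t)"
    and dw': "\<And>k t. 1 \<le> k \<Longrightarrow> t \<in> {0<..<b} - C \<Longrightarrow> ((\<lambda>t. w' t k) has_real_derivative coag (w' t) k) (at t)"
  shows "1 \<le> k \<Longrightarrow> t \<in> {0..b} \<Longrightarrow> w t k = w' t k"
proof (induction k arbitrary: t rule: less_induct)
  case (less k)
  have eqc: "coag (w s) k = coag (w' s) k" if "s \<in> {0..b}" for s
    by (rule coag_cong) (use less.IH that in auto)
  have "(\<lambda>s. w s k - w' s k) t = (\<lambda>s. w s k - w' s k) 0"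
  proof (rule countable_deriv_zero_const[of 0 t "\<lambda>s. w s k - w' s k" C, OF _ _ cC])
    show "0 \<le> t" using less by auto
    show "continuous_on {0..t} (\<lambda>s. w s k - w' s k)"
      using less by (intro continuous_intros continuous_on_subset[OF cw] continuous_on_subset[OF cw']) auto
    fix x assume x: "x \<in> {0<..<t} - C"
    hence xb: "x \<in> {0<..<b} - C" using less by auto
    have "((\<lambda>s. w s k - w' s k) has_real_derivative (coag (w x) k - coag (w' x) k)) (at x)"
      using dw[OF less(2) xb] dw'[OF less(2) xb] by (intro derivative_intros)
    thus "((\<lambda>s. w s k - w' s k) has_real_derivative 0) (at x)" using eqc[of x] xb by simp
  qed
  thus ?case using w0[OF less(2)] by simp
qed

lemma transform_sol:
  fixes v :: "real \<Rightarrow> nat \<Rightarrow> real" and \<mu> :: "real \<Rightarrow> real"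
  assumes b: "0 \<le> b" 
    and cv: "\<And>k. 1 \<le> k \<Longrightarrow> continuous_on {0..b} (\<lambda>t. v t k)"
    and i\<mu>: "\<mu> integrable_on {0..b}"
    and c\<mu>: "\<And>t. t \<in> {0<..<b} - C \<Longrightarrow> isCont \<mu> t"
    and dv: "\<And>k t. 1 \<le> k \<Longrightarrow> t \<in> {0<..<b} - C \<Longrightarrow>
       ((\<lambda>s. v s k) has_real_derivative (coag (v t) k - real k * v t k * \<mu> t)) (at t)"
  shows "\<And>k. 1 \<le> k \<Longrightarrow> continuous_on {0..b} (\<lambda>t. v t k * exp (real k * integral {0..t} \<mu>))"
    and "\<And>k t. 1 \<le> k \<Longrightarrow> t \<in> {0<..<b} - C \<Longrightarrow>
       ((\<lambda>t. v t k * exp (real k * integral {0..t} \<mu>)) has_real_derivative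
          coag (\<lambda>k. v t k * exp (real k * integral {0..t} \<mu>)) k) (at t)"
proof -
  have cN: "continuous_on {0..b} (\<lambda>t. integral {0..t} \<mu>)"
    by (rule indefinite_integral_continuous_1[OF i\<mu>])
  fix k :: nat assume k: "1 \<le> k"
  show "continuous_on {0..b} (\<lambda>t. v t k * exp (real k * integral {0..t} \<mu>))"
    by (intro continuous_intros cv[OF k] cN)
next
  fix k :: nat and t assume k: "1 \<le> k" and t: "t \<in> {0<..<b} - C"
  have tb: "t \<in> {0..b}" using t by auto
  have "((\<lambda>u. integral {0..u} \<mu>) has_vector_derivative \<mu> t) (at t within ({0..b} - {}))"
    by (rule integral_has_vector_derivative_continuous_at[OF i\<mu>])
       (use tb c\<mu>[OF t] in \<open>auto intro: continuous_at_imp_continuous_at_within\<close>)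
  moreover have "at t within {0..b} = at t"
    by (rule at_within_interior) (use t in auto)
  ultimately have dN: "((\<lambda>u. integral {0..u} \<mu>) has_real_derivative \<mu> t) (at t)"
    by (simp add: has_real_derivative_iff_has_vector_derivative)
  let ?N = "integral {0..t} \<mu>"
  have d: "((\<lambda>t. v t k * exp (real k * integral {0..t} \<mu>)) has_real_derivative
     (coag (v t) k - real k * v t k * \<mu> t) * exp (real k * ?N) + v t k * (exp (real k * ?N) * (real k * \<mu> t))) (at t)"
    by (rule DERIV_mult[OF dv[OF k t] DERIV_fun_exp[OF DERIV_cmult[OF dN]], THEN DERIV_cong])
      (simp add: algebra_simps)
  have eq: "coag (\<lambda>k. v t k * exp (real k * integral {0..t} \<mu>)) k = coag (v t) k * exp (real k * ?N)"
  proof -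
    have "(\<Sum>l = 1..k - 1. v t l * exp (real l * ?N) * (v t (k - l) * exp (real (k - l) * ?N)))
        = (\<Sum>l = 1..k - 1. v t l * v t (k - l) * exp (real k * ?N))"
    proof (rule sum.cong)
      fix l assume "l \<in> {1..k-1}"
      hence "real l + real (k - l) = real k" by auto
      hence "exp (real l * ?N) * exp (real (k - l) * ?N) = exp (real k * ?N)"
        by (metis distrib_right exp_add)
      thus "v t l * exp (real l * ?N) * (v t (k - l) * exp (real (k - l) * ?N)) = v t l * v t (k - l) * exp (real k * ?N)"
        by (metis mult.assoc mult.left_commute)
    qed simp
    thus ?thesis unfolding coag_def by (simp add: sum_distrib_right mult.assoc)
  qed
  show "((\<lambda>t. v t k * exp (real k * integral {0..t} \<mu>)) has_real_derivative
          coag (\<lambda>k. v t k * exp (real k * integral {0..t} \<mu>)) k) (at t)"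
    using d unfolding eq by (simp add: algebra_simps)
qed

lemma isCont_of_cont_on:
  fixes f :: "real \<Rightarrow> real"
  assumes "continuous_on {a..b} f" "t \<in> {a<..<b}"
  shows "isCont f t"
proof -
  have "continuous_on {a<..<b} f" using assms(1) by (rule continuous_on_subset) auto
  thus ?thesis using assms(2) continuous_on_eq_continuous_at[OF open_greaterThanLessThan] by blast
qed

lemma sub_sol_props:
  fixes v :: "real \<Rightarrow> nat \<Rightarrow> real" and lam :: "real \<Rightarrow> real"
  assumes sol: "sub_sol lam v0 v" and clam: "continuous_on {0..} lam" and b: "0 < b"
  shows "\<exists>C. countable C \<and> (\<forall>k\<ge>1. continuous_on {0..b} (\<lambda>t. v t k))
     \<and> (\<lambda>s. m0 (v s)) integrable_on {0..b} \<and> lam integrable_on {0..b}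
     \<and> (\<forall>t\<in>{0<..<b}-C. isCont (\<lambda>s. m0 (v s) + lam s) t)
     \<and> (\<forall>k t. 1 \<le> k \<longrightarrow> t \<in> {0<..<b}-C \<longrightarrow>
          ((\<lambda>s. v s k) has_real_derivative (coag (v t) k - real k * v t k * (m0 (v t) + lam t))) (at t))"
proof -
  define f where "f k s = coag (v s) k - real k * v s k * m0 (v s) - lam s * real k * v s k" for k s
  have hI0: "\<forall>k\<ge>1. \<forall>t\<ge>0.
        ((\<lambda>s. coag (v s) k - real k * v s k * m0 (v s) - lam s * real k * v s k)
           has_integral (v t k - v 0 k)) {0..t}"
    using sol[unfolded sub_sol_def] by (elim conjE) assumption
  have mono: "mono_on {0..} (\<lambda>t. m0 (v 0) - m0 (v t))"
    using sol[unfolded sub_sol_def] by (elim conjE) assumption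
  have hI: "(f k has_integral (v t k - v 0 k)) {0..t}" if "1 \<le> k" "0 \<le> t" for k t
    unfolding f_def[abs_def] by (rule hI0[rule_format, OF that])
  have fint: "f k integrable_on {0..b}" if "1 \<le> k" for k using hI[OF that, of b] b by (auto simp: integrable_on_def)
  have veq: "v t k = v 0 k + integral {0..t} (f k)" if "1 \<le> k" "t \<in> {0..b}" for k t
    using hI[OF that(1), of t] that(2) by (simp add: integral_unique)
  have cv: "continuous_on {0..b} (\<lambda>t. v t k)" if "1 \<le> k" for k
  proof -
    have "continuous_on {0..b} (\<lambda>t. integral {0..t} (f k))"
      by (rule indefinite_integral_continuous_1[OF fint[OF that]])
    hence "continuous_on {0..b} (\<lambda>t. v 0 k + integral {0..t} (f k))"
      by (rule continuous_on_add[OF continuous_on_const])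
    moreover have "\<And>t. t \<in> {0..b} \<Longrightarrow> v 0 k + integral {0..t} (f k) = v t k"
      by (rule sym, rule veq[OF that])
    ultimately show ?thesis by (rule continuous_on_eq)
  qed
  have monob: "mono_on {0..b} (\<lambda>t. m0 (v 0) - m0 (v t))" by (rule mono_on_subset[OF mono]) auto
  have "(\<lambda>t. m0 (v 0) - (m0 (v 0) - m0 (v t))) integrable_on {0..b}"
    by (intro integrable_diff integrable_const_ivl integrable_on_mono_on monob)
  hence im0: "(\<lambda>s. m0 (v s)) integrable_on {0..b}" by simp
  have clamb: "continuous_on {0..b} lam" by (rule continuous_on_subset[OF clam]) auto
  have ilam: "lam integrable_on {0..b}" by (rule integrable_continuous_interval[OF clamb])
  define C where "C = {t\<in>{0<..<b}. \<not> isCont (\<lambda>t. m0 (v 0) - m0 (v t)) t}"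
  have cC: "countable C" unfolding C_def
    by (rule mono_on_ctble_discont_open) (auto intro: mono_on_subset[OF mono])
  have cm0: "isCont (\<lambda>t. m0 (v t)) t" if t: "t \<in> {0<..<b} - C" for t
  proof -
    have "isCont (\<lambda>t. m0 (v 0) - m0 (v t)) t" using t by (auto simp: C_def)
    hence "isCont (\<lambda>t. m0 (v 0) - (m0 (v 0) - m0 (v t))) t" by (rule isCont_diff[OF continuous_const])
    thus "isCont (\<lambda>t. m0 (v t)) t" by simp
  qed
  have cmu: "isCont (\<lambda>s. m0 (v s) + lam s) t" if t: "t \<in> {0<..<b} - C" for t
  proof -
    have "isCont (\<lambda>t. m0 (v t)) t" using cm0[OF t] .
    moreover have "isCont lam t" using isCont_of_cont_on[OF clamb] t by auto
    ultimately show ?thesis by (intro continuous_intros)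
  qed
  have der: "((\<lambda>s. v s k) has_real_derivative (coag (v t) k - real k * v t k * (m0 (v t) + lam t))) (at t)"
    if k: "1 \<le> k" and t: "t \<in> {0<..<b} - C" for k t
  proof -
    have cvl: "isCont (\<lambda>s. v s l) t" if "1 \<le> l" for l using isCont_of_cont_on[OF cv[OF that]] t by auto
    have cm: "isCont (\<lambda>s. m0 (v s)) t" using cm0[OF t] .
    have cl: "isCont lam t" using isCont_of_cont_on[OF clamb] t by auto
    have "\<forall>l\<in>{1..k-1}. isCont (\<lambda>x. v x l * v x (k - l)) t" using cvl by (auto intro!: isCont_mult)
    hence "isCont (\<lambda>s. \<Sum>l=1..k-1. v s l * v s (k-l)) t" by (rule isCont_sum)
    hence cc: "isCont (\<lambda>s. coag (v s) k) t" unfolding coag_def by (rule isCont_mult[OF continuous_const])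
    have fk: "f k = (\<lambda>s. coag (v s) k - real k * v s k * m0 (v s) - lam s * real k * v s k)"
      by (rule ext) (simp add: f_def)
    have cf: "isCont (f k) t" unfolding fk
      by (intro isCont_diff cc isCont_mult[OF isCont_mult[OF continuous_const cvl[OF k]] cm]
          isCont_mult[OF isCont_mult[OF cl continuous_const] cvl[OF k]])
    have "((\<lambda>u. integral {0..u} (f k)) has_vector_derivative f k t) (at t within ({0..b} - {}))"
      by (rule integral_has_vector_derivative_continuous_at[OF fint[OF k]])
         (use t cf in \<open>auto intro: continuous_at_imp_continuous_at_within\<close>)
    moreover have "at t within {0..b} = at t" by (rule at_within_interior) (use t in auto)
    ultimately have "((\<lambda>u. integral {0..u} (f k)) has_real_derivative f k t) (at t)"
      by (simp add: has_real_derivative_iff_has_vector_derivative)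
    hence "((\<lambda>u. v 0 k + integral {0..u} (f k)) has_real_derivative f k t) (at t)"
      by (auto intro!: derivative_eq_intros)
    hence "((\<lambda>s. v s k) has_real_derivative f k t) (at t)"
    proof (rule has_field_derivative_transform_within_open[of _ _ _ "{0<..<b}"])
      show "t \<in> {0<..<b}" using t by auto
      fix x assume "x \<in> {0<..<b}"
      hence "x \<in> {0..b}" by auto
      thus "v 0 k + integral {0..x} (f k) = v x k" by (rule veq[OF k, symmetric])
    qed simp
    thus ?thesis by (simp add: f_def algebra_simps)
  qed
  show ?thesis 
    apply (rule exI[of _ C])
    using cC cv im0 ilam cmu der by simp
qed




lemma rev_part:
  fixes a :: "nat \<Rightarrow> real"
  shows "(\<Sum>l=1..k-1. real (k - l) * a l * a (k - l)) = (\<Sum>l=1..k-1. real l * a l * a (k - l))"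
proof -
    have "(\<Sum>l=1..k-1. real l * a l * a (k - l)) = (\<Sum>l=1..k-1. real (k - 1 + 1 - l) * a (k - 1 + 1 - l) * a (k - (k - 1 + 1 - l)))"
      by (rule sum.atLeastAtMost_rev)
    also have "\<dots> = (\<Sum>l=1..k-1. real (k - l) * a l * a (k - l))"
    proof (rule sum.cong)
      fix l assume "l \<in> {1..k-1}"
      hence "k - 1 + 1 - l = k - l" "k - (k - l) = l" by auto
      thus "real (k - 1 + 1 - l) * a (k - 1 + 1 - l) * a (k - (k - 1 + 1 - l)) = real (k - l) * a l * a (k - l)"
        by simp
    qed simp
    finally show ?thesis by simp
qed

lemma coag_sym:
  fixes a :: "nat \<Rightarrow> real"
  shows "coag a k = (\<Sum>l=1..k-1. real l * a l * a (k - l))"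
proof -
  have "(\<Sum>l=1..k-1. real k * (a l * a (k - l))) = (\<Sum>l=1..k-1. real (k - l) * a l * a (k - l) + real l * a l * a (k - l))"
  proof (rule sum.cong)
    fix l assume "l \<in> {1..k-1}"
    hence "l \<le> k" by auto
    thus "real k * (a l * a (k - l)) = real (k - l) * a l * a (k - l) + real l * a l * a (k - l)"
      by (simp add: of_nat_diff algebra_simps)
  qed simp
  also have "\<dots> = (\<Sum>l=1..k-1. real (k - l) * a l * a (k - l)) + (\<Sum>l=1..k-1. real l * a l * a (k - l))"
    by (rule sum.distrib)
  also have "\<dots> = 2 * (\<Sum>l=1..k-1. real l * a l * a (k - l))"
    unfolding rev_part by simp
  finally have e: "real k * (\<Sum>l=1..k-1. a l * a (k - l)) = 2 * (\<Sum>l=1..k-1. real l * a l * a (k - l))"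
    by (simp add: sum_distrib_left)
  show ?thesis unfolding coag_def using e by simp
qed
lemma coag_sum:
  fixes a :: "nat \<Rightarrow> real"
  shows "(\<Sum>k=1..n. coag a k) = (\<Sum>l=1..n. real l * a l * (\<Sum>j=1..n-l. a j))"
proof (induction n)
  case 0
  then show ?case by simp
next
  case (Suc n)
  have "(\<Sum>k=1..Suc n. coag a k) = (\<Sum>k=1..n. coag a k) + coag a (Suc n)" by simp
  also have "\<dots> = (\<Sum>l=1..n. real l * a l * (\<Sum>j=1..n-l. a j)) + (\<Sum>l=1..n. real l * a l * a (Suc n - l))"
    using Suc by (simp add: coag_sym)
  also have "\<dots> = (\<Sum>l=1..n. real l * a l * (\<Sum>j=1..Suc n-l. a j))"
    unfolding sum.distrib[symmetric]
  proof (rule sum.cong)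
    fix l assume "l \<in> {1..n}"
    hence "Suc n - l = Suc (n - l)" by auto
    thus "real l * a l * (\<Sum>j=1..n-l. a j) + real l * a l * a (Suc n - l) = real l * a l * (\<Sum>j=1..Suc n-l. a j)"
      by (simp add: algebra_simps)
  qed simp
  also have "\<dots> = (\<Sum>l=1..Suc n. real l * a l * (\<Sum>j=1..Suc n-l. a j))" by simp
  finally show ?case .
qed

lemma Mt_eq:
  assumes bt: "burning_times \<beta>" and "\<beta> j < t" "t \<le> \<beta> (Suc j)"
  shows "Mt \<beta> t = j"
  unfolding Mt_def
proof (rule Greatest_equality)
  show "\<beta> j < t" by fact
  fix y assume y: "\<beta> y < t"
  show "y \<le> j"
  proof (rule ccontr)
    assume "\<not> y \<le> j"
    hence "Suc j \<le> y" by simp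
    hence "\<beta> (Suc j) \<le> \<beta> y" using bt unfolding burning_times_def by (simp add: strict_mono_less_eq)
    thus False using y assms(3) by simp
  qed
qed

lemma beta_nonneg:
  assumes bt: "burning_times \<beta>" shows "0 \<le> \<beta> j"
proof -
  have "\<beta> 0 \<le> \<beta> j" using bt unfolding burning_times_def by (metis strict_mono_less_eq le0)
  thus ?thesis using bt unfolding burning_times_def by simp
qed

lemma interval_exists:
  assumes bt: "burning_times \<beta>" and t: "0 < t"
  shows "\<exists>j. \<beta> j < t \<and> t \<le> \<beta> (Suc j)"
proof -
  have "filterlim \<beta> at_top sequentially" using bt unfolding burning_times_def by simp
  hence "eventually (\<lambda>n. t \<le> \<beta> n) sequentially" by (simp add: filterlim_at_top)
  then obtain n where n: "t \<le> \<beta> n" by (metis eventually_sequentially order.refl)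
  define i where "i = (LEAST n. t \<le> \<beta> n)"
  have ti: "t \<le> \<beta> i" unfolding i_def by (rule LeastI[of _ n]) (rule n)
  have i0: "i \<noteq> 0" using ti t bt unfolding burning_times_def by (cases "i = 0") auto
  then obtain j where j: "i = Suc j" by (cases i) auto
  have "\<not> t \<le> \<beta> j" unfolding i_def[symmetric, THEN sym] using j
    by (metis i_def lessI not_less_Least)
  hence "\<beta> j < t" by simp
  thus ?thesis using ti j by blast
qed

lemma alt_mono:
  assumes bt: "burning_times \<beta>" and sol: "alt_sol \<beta> v0 v" and t: "0 < t"
  shows "m0 (v t) \<le> m0 (v (\<beta> (Mt \<beta> t)))"
proof -
  have inN: "\<forall>t\<ge>0. in_N (v t)" using sol[unfolded alt_sol_def] by (elim conjE) assumption
  have cont: "\<forall>k\<ge>1. continuous_on {0..} (\<lambda>t. v t k)" using sol[unfolded alt_sol_def] by (elim conjE) assumption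
  have der: "\<forall>k\<ge>1. \<forall>t>0. t \<notin> range \<beta> \<longrightarrow>
        ((\<lambda>s. v s k) has_real_derivative
           (coag (v t) k - real k * v t k * m0 (v (\<beta> (Mt \<beta> t))))) (at t)"
    using sol[unfolded alt_sol_def] by (elim conjE) assumption
  have nn: "0 \<le> v s k" if "0 \<le> s" "1 \<le> k" for s k using inN that unfolding in_N_def by auto
  have sm: "summable (\<lambda>k. v s (Suc k))" if "0 \<le> s" for s using inN that unfolding in_N_def by auto
  obtain j where j: "\<beta> j < t" "t \<le> \<beta> (Suc j)" using interval_exists[OF bt t] by blast
  have Mtt: "Mt \<beta> t = j" by (rule Mt_eq[OF bt j])
  define c where "c = m0 (v (\<beta> j))"
  define a where "a = \<beta> j"
  define b where "b = \<beta> (Suc j)"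
  have a0: "0 \<le> a" unfolding a_def by (rule beta_nonneg[OF bt])
  have ab: "a < b" unfolding a_def b_def using bt unfolding burning_times_def strict_mono_def by simp
  have nnab: "0 \<le> v s k" if "s \<in> {a..b}" "1 \<le> k" for s k using nn that a0 by auto
  have derab: "((\<lambda>s. v s k) has_real_derivative (coag (v s) k - real k * v s k * c)) (at s)"
    if "s \<in> {a<..<b}" "1 \<le> k" for s k
  proof -
    have "s \<notin> range \<beta>"
    proof
      assume "s \<in> range \<beta>"
      then obtain i where i: "s = \<beta> i" by auto
      have "\<beta> j < \<beta> i" "\<beta> i < \<beta> (Suc j)" using that i unfolding a_def b_def by auto
      hence "j < i" "i < Suc j" using bt unfolding burning_times_def by (simp_all add: strict_mono_less)
      thus False by simp
    qed
    moreover have "s > 0" using that a0 by auto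
    moreover have "Mt \<beta> s = j" using that by (intro Mt_eq[OF bt]) (auto simp: a_def b_def)
    ultimately show ?thesis using der that unfolding c_def by auto
  qed
  define S where "S s n = (\<Sum>k=1..n. v s k)" for s n
  have Smono: "S s m \<le> S s n" if "m \<le> n" "s \<in> {a..b}" for s m n
    unfolding S_def using that by (intro sum_mono2) (auto intro: nnab)
  have Sle: "S s n \<le> m0 (v s)" if "0 \<le> s" for s n
  proof -
    have "S s n = (\<Sum>k<n. v s (Suc k))" unfolding S_def
      by (metis One_nat_def sum.atLeast1_atMost_eq)
    also have "\<dots> \<le> m0 (v s)" unfolding m0_def
      by (rule sum_le_suminf[OF sm[OF that]]) (use nn that in auto)
    finally show ?thesis .
  qed
  have claim: "\<forall>s\<in>{a..b}. S s n \<le> c" for n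
  proof (induction n)
    case 0
    have "0 \<le> m0 (v (\<beta> j))" unfolding m0_def using nn sm a0 unfolding a_def
      by (intro suminf_nonneg) auto
    then show ?case by (simp add: S_def c_def)
  next
    case (Suc n)
    show ?case
    proof
      fix s assume s: "s \<in> {a..b}"
      have "S s (Suc n) \<le> S a (Suc n)"
      proof (rule DERIV_nonpos_imp_decreasing_open[of a s "\<lambda>s. S s (Suc n)"])
        show "a \<le> s" using s by auto
        show "continuous_on {a..s} (\<lambda>s. S s (Suc n))" unfolding S_def
          by (intro continuous_on_sum continuous_on_subset[OF cont[rule_format]]) (use a0 in auto)
        fix x assume x: "a < x" "x < s"
        hence xab: "x \<in> {a<..<b}" "x \<in> {a..b}" using s by auto
        have d: "((\<lambda>s. S s (Suc n)) has_real_derivative (\<Sum>k=1..Suc n. coag (v x) k - real k * v x k * c)) (at x)"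
          unfolding S_def by (intro DERIV_sum derab xab) auto
        have "(\<Sum>k=1..Suc n. coag (v x) k - real k * v x k * c)
            = (\<Sum>l=1..Suc n. real l * v x l * (S x (Suc n - l) - c))"
          unfolding sum_subtractf coag_sum S_def by (simp add: algebra_simps sum_subtractf sum_distrib_left)
        also have "\<dots> \<le> 0"
        proof (rule sum_nonpos)
          fix l assume l: "l \<in> {1..Suc n}"
          have "S x (Suc n - l) \<le> S x n" using l xab by (intro Smono) auto
          moreover have "S x n \<le> c" using Suc xab(2) by blast
          ultimately have "S x (Suc n - l) - c \<le> 0" by simp
          moreover have "0 \<le> real l * v x l" using l xab nnab by auto
          ultimately show "real l * v x l * (S x (Suc n - l) - c) \<le> 0"
            by (simp add: mult_nonneg_nonpos)
        qed
        finally show "\<exists>y. ((\<lambda>s. S s (Suc n)) has_real_derivative y) (at x) \<and> y \<le> 0" using d by blast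
      qed
      also have "\<dots> \<le> c" unfolding c_def a_def[symmetric] using Sle a0 by auto
      finally show "S s (Suc n) \<le> c" .
    qed
  qed
  have "m0 (v t) \<le> c" unfolding m0_def
  proof (rule suminf_le_const[OF sm])
    show "0 \<le> t" using t by simp
    fix n
    have "(\<Sum>k<n. v t (Suc k)) = S t n" unfolding S_def
      by (metis One_nat_def sum.atLeast1_atMost_eq)
    also have "\<dots> \<le> c" using claim j by (auto simp: a_def b_def)
    finally show "(\<Sum>k<n. v t (Suc k)) \<le> c" .
  qed
  thus ?thesis using Mtt by (simp add: c_def)
qed




lemma alt_c_int:
  assumes bt: "burning_times \<beta>"
  shows "(\<lambda>s. m0 (v (\<beta> (Mt \<beta> s)))) integrable_on {0..b}"
proof -
  let ?c = "\<lambda>s. m0 (v (\<beta> (Mt \<beta> s)))"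
  have b0: "\<beta> 0 = 0" using bt unfolding burning_times_def by simp
  have sm: "strict_mono \<beta>" using bt unfolding burning_times_def by simp
  have ij: "?c integrable_on {0..\<beta> j}" for j
  proof (induction j)
    case 0
    show ?case using b0 integrable_on_refl[of ?c 0] by simp
  next
    case (Suc j)
    have lt: "\<beta> j < \<beta> (Suc j)" using sm unfolding strict_mono_def by simp
    have "?c integrable_on {\<beta> j..\<beta> (Suc j)}"
    proof (rule integrable_spike_finite[where S="{\<beta> j}" and f="\<lambda>_. m0 (v (\<beta> j))"])
      fix x assume "x \<in> {\<beta> j..\<beta> (Suc j)} - {\<beta> j}"
      hence "\<beta> j < x" "x \<le> \<beta> (Suc j)" by auto
      thus "?c x = m0 (v (\<beta> j))" using Mt_eq[OF bt] by simp
    qed auto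
    moreover have "0 \<le> \<beta> j" by (rule beta_nonneg[OF bt])
    ultimately show ?case using Henstock_Kurzweil_Integration.integrable_combine[OF _ less_imp_le[OF lt] Suc.IH] by blast
  qed
  have "filterlim \<beta> at_top sequentially" using bt unfolding burning_times_def by simp
  hence "eventually (\<lambda>n. b \<le> \<beta> n) sequentially" by (simp add: filterlim_at_top)
  then obtain n where n: "b \<le> \<beta> n" by (metis eventually_sequentially order.refl)
  show ?thesis by (rule integrable_on_subinterval[OF ij[of n]]) (use n in auto)
qed

lemma alt_c_cont:
  assumes bt: "burning_times \<beta>" and t: "0 < t" "t \<notin> range \<beta>"
  shows "isCont (\<lambda>s. m0 (v (\<beta> (Mt \<beta> s)))) t"
proof -
  obtain j where j: "\<beta> j < t" "t \<le> \<beta> (Suc j)" using interval_exists[OF bt t(1)] by blast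
  have j2: "t < \<beta> (Suc j)" using j t(2) by (metis order.not_eq_order_implies_strict rangeI)
  have "eventually (\<lambda>s. s \<in> {\<beta> j<..<\<beta> (Suc j)}) (nhds t)"
    by (rule eventually_nhds_in_open) (use j j2 in auto)
  hence ev: "eventually (\<lambda>s. m0 (v (\<beta> (Mt \<beta> s))) = m0 (v (\<beta> j))) (nhds t)"
    by (rule eventually_mono) (use Mt_eq[OF bt] in auto)
  show ?thesis using isCont_cong[OF ev] by simp
qed

lemma compare_D:
  fixes g :: "real \<Rightarrow> real"
  assumes T: "0 \<le> T" and ig: "g integrable_on {0..T}"
    and pos: "\<And>s. s \<in> {0<..T} \<Longrightarrow> integral {0..s} g \<le> 0 \<Longrightarrow> 0 \<le> g s"
  shows "0 \<le> integral {0..T} g"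
proof (rule ccontr)
  assume neg: "\<not> 0 \<le> integral {0..T} g"
  define D where "D s = integral {0..s} g" for s
  have cD: "continuous_on {0..T} D" unfolding D_def by (rule indefinite_integral_continuous_1[OF ig])
  define A where "A = {0..T} \<inter> D -` {0..}"
  have clA: "closed A" unfolding A_def by (rule continuous_closed_preimage[OF cD]) auto
  have "D 0 = 0" unfolding D_def by simp
  hence A0: "0 \<in> A" using T by (simp add: A_def)
  have bddA: "bdd_above A" unfolding A_def by (auto intro: bdd_aboveI[where M=T])
  define t0 where "t0 = Sup A"
  have t0A: "t0 \<in> A" unfolding t0_def using closed_contains_Sup[OF _ bddA clA] A0 by auto
  have t0: "0 \<le> t0" "t0 \<le> T" "0 \<le> D t0" using t0A by (auto simp: A_def)
  have after: "D s < 0" if "t0 < s" "s \<le> T" for s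
  proof (rule ccontr)
    assume "\<not> D s < 0"
    hence "s \<in> A" using that t0 by (auto simp: A_def)
    hence "s \<le> t0" unfolding t0_def using bddA by (simp add: cSup_upper)
    thus False using that by simp
  qed
  have t0T: "t0 < T" using t0 neg unfolding D_def by (cases "t0 = T") auto
  have ig2: "g integrable_on {t0..T}" by (rule integrable_on_subinterval[OF ig]) (use t0 in auto)
  have "integral {t0..T} g = integral {t0..T} (\<lambda>s. if s = t0 then 0 else g s)"
  proof (rule integral_spike[of "{t0}"])
    fix x assume x: "x \<in> {t0..T} - {t0}"
    hence "t0 < x" "x \<le> T" by auto
    hence "D x < 0" "x \<in> {0<..T}" using after t0 by auto
    hence "0 \<le> g x" using pos unfolding D_def by auto
    thus "(if x = t0 then 0 else g x) = g x" using x by auto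
  qed auto
  also have "\<dots> \<ge> 0"
  proof (rule integral_nonneg)
    show "(\<lambda>s. if s = t0 then 0 else g s) integrable_on {t0..T}"
      by (rule integrable_spike_finite[where S="{t0}", OF _ _ ig2]) auto
    fix x assume x: "x \<in> {t0..T}"
    show "0 \<le> (if x = t0 then 0 else g x)"
    proof (cases "x = t0")
      case False
      hence "t0 < x" "x \<le> T" using x by auto
      hence "D x < 0" "x \<in> {0<..T}" using after t0 by auto
      thus ?thesis using pos False unfolding D_def by auto
    qed simp
  qed
  finally have "0 \<le> integral {t0..T} g" .
  moreover have "integral {0..t0} g + integral {t0..T} g = integral {0..T} g"
    using Henstock_Kurzweil_Integration.integral_combine[OF t0(1) t0(2) ig] .
  ultimately show False using t0 neg unfolding D_def by simp
qed




lemma m0_le: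
  assumes "in_N x" "in_N y" "\<And>k. 1 \<le> k \<Longrightarrow> x k \<le> y k"
  shows "m0 x \<le> m0 y"
  unfolding m0_def using assms unfolding in_N_def by (intro suminf_le) auto

lemma rel_sols:
  fixes v1 v2 :: "real \<Rightarrow> nat \<Rightarrow> real" and \<mu>1 \<mu>2 :: "real \<Rightarrow> real"
  assumes b: "0 \<le> b" and cC1: "countable C1" and cC2: "countable C2"
    and cv1: "\<And>k. 1 \<le> k \<Longrightarrow> continuous_on {0..b} (\<lambda>t. v1 t k)"
    and i1: "\<mu>1 integrable_on {0..b}"
    and c1: "\<And>t. t \<in> {0<..<b} - C1 \<Longrightarrow> isCont \<mu>1 t"
    and dv1: "\<And>k t. 1 \<le> k \<Longrightarrow> t \<in> {0<..<b} - C1 \<Longrightarrow>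
       ((\<lambda>s. v1 s k) has_real_derivative (coag (v1 t) k - real k * v1 t k * \<mu>1 t)) (at t)"
    and cv2: "\<And>k. 1 \<le> k \<Longrightarrow> continuous_on {0..b} (\<lambda>t. v2 t k)"
    and i2: "\<mu>2 integrable_on {0..b}"
    and c2: "\<And>t. t \<in> {0<..<b} - C2 \<Longrightarrow> isCont \<mu>2 t"
    and dv2: "\<And>k t. 1 \<le> k \<Longrightarrow> t \<in> {0<..<b} - C2 \<Longrightarrow>
       ((\<lambda>s. v2 s k) has_real_derivative (coag (v2 t) k - real k * v2 t k * \<mu>2 t)) (at t)"
    and v0: "v1 0 = v2 0"
  shows "1 \<le> k \<Longrightarrow> t \<in> {0..b} \<Longrightarrow>
     v1 t k * exp (real k * integral {0..t} \<mu>1) = v2 t k * exp (real k * integral {0..t} \<mu>2)"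
proof -
  let ?C = "C1 \<union> C2"
  note T1 = transform_sol[of b v1 \<mu>1 ?C, OF b cv1 i1]
  note T2 = transform_sol[of b v2 \<mu>2 ?C, OF b cv2 i2]
  have "countable ?C" using cC1 cC2 by simp
  show "1 \<le> k \<Longrightarrow> t \<in> {0..b} \<Longrightarrow>
     v1 t k * exp (real k * integral {0..t} \<mu>1) = v2 t k * exp (real k * integral {0..t} \<mu>2)"
  proof (rule uniq_sol[where w="\<lambda>t k. v1 t k * exp (real k * integral {0..t} \<mu>1)"
          and w'="\<lambda>t k. v2 t k * exp (real k * integral {0..t} \<mu>2)", OF b \<open>countable ?C\<close>])
    show "\<And>k. 1 \<le> k \<Longrightarrow> continuous_on {0..b} (\<lambda>t. v1 t k * exp (real k * integral {0..t} \<mu>1))"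
      by (rule T1(1)) (use c1 dv1 in auto)
    show "\<And>k. 1 \<le> k \<Longrightarrow> continuous_on {0..b} (\<lambda>t. v2 t k * exp (real k * integral {0..t} \<mu>2))"
      by (rule T2(1)) (use c2 dv2 in auto)
    show "\<And>k. 1 \<le> k \<Longrightarrow> v1 0 k * exp (real k * integral {0..0} \<mu>1) = v2 0 k * exp (real k * integral {0..0} \<mu>2)"
      using v0 by simp
    show "\<And>k t. 1 \<le> k \<Longrightarrow> t \<in> {0<..<b} - ?C \<Longrightarrow> ((\<lambda>t. v1 t k * exp (real k * integral {0..t} \<mu>1)) has_real_derivative
          coag (\<lambda>k. v1 t k * exp (real k * integral {0..t} \<mu>1)) k) (at t)"
      by (rule T1(2)) (use c1 dv1 in auto)
    show "\<And>k t. 1 \<le> k \<Longrightarrow> t \<in> {0<..<b} - ?C \<Longrightarrow> ((\<lambda>t. v2 t k * exp (real k * integral {0..t} \<mu>2)) has_real_derivative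
          coag (\<lambda>k. v2 t k * exp (real k * integral {0..t} \<mu>2)) k) (at t)"
      by (rule T2(2)) (use c2 dv2 in auto)
  qed
qed

lemma ge_from_rel:
  fixes x y A B :: real
  assumes "x * exp (real k * A) = y * exp (real k * B)" "A \<le> B" "0 \<le> y"
  shows "y \<le> x"
proof -
  have "y * exp (real k * A) \<le> y * exp (real k * B)"
    using assms by (intro mult_left_mono) (auto intro: mult_left_mono)
  hence "y * exp (real k * A) \<le> x * exp (real k * A)" using assms(1) by simp
  thus ?thesis by simp
qed




theorem theorem10:
  fixes v0 :: "nat \<Rightarrow> real" and T :: real and lam :: "real \<Rightarrow> real"
    and vcrit vsub :: "real \<Rightarrow> nat \<Rightarrow> real"
  assumes "in_N_star v0" and "T > 0"
    and "crit_sol v0 vcrit"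
    and "continuous_on {0..} lam" and "\<exists>c>0. \<forall>t\<ge>0. c \<le> lam t"
    and "sub_sol lam v0 vsub"
  shows "integral {0..T} (Phi vsub) - integral {0..T} lam \<le> integral {0..T} (Phi vcrit)
    \<and> (\<forall>\<beta> valt. burning_times \<beta> \<longrightarrow> alt_sol \<beta> v0 valt \<longrightarrow>
           integral {0..T} (Phi_alt \<beta> valt) \<le> integral {0..T} (Phi vcrit))"
proof -
  note T = \<open>T > 0\<close>
  obtain c0 where c0: "c0 > 0" "\<forall>t\<ge>0. c0 \<le> lam t" using assms(5) by blast
  define b where "b = T + 1"
  have b: "0 < b" "0 \<le> b" "T \<le> b" using T by (auto simp: b_def)
  have critS: "sub_sol (\<lambda>_. 0) v0 vcrit" using assms(3) unfolding crit_sol_def .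
  have vc0: "vcrit 0 = v0" using critS unfolding sub_sol_def by blast
  have vs0: "vsub 0 = v0" using assms(6) unfolding sub_sol_def by blast
  have inNc: "\<forall>t\<ge>0. in_N (vcrit t)" using critS unfolding sub_sol_def by blast
  have inNs: "\<forall>t\<ge>0. in_N (vsub t)" using assms(6) unfolding sub_sol_def by blast
  obtain Cc where Cc: "countable Cc" "\<forall>k\<ge>1. continuous_on {0..b} (\<lambda>t. vcrit t k)"
     "(\<lambda>s. m0 (vcrit s)) integrable_on {0..b}" "(\<lambda>_. 0::real) integrable_on {0..b}"
     "\<forall>t\<in>{0<..<b}-Cc. isCont (\<lambda>s. m0 (vcrit s) + 0) t"
     "\<forall>k t. 1 \<le> k \<longrightarrow> t \<in> {0<..<b}-Cc \<longrightarrow>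
          ((\<lambda>s. vcrit s k) has_real_derivative (coag (vcrit t) k - real k * vcrit t k * (m0 (vcrit t) + 0))) (at t)"
    using sub_sol_props[OF critS continuous_on_const b(1)] by blast
  obtain Cs where Cs: "countable Cs" "\<forall>k\<ge>1. continuous_on {0..b} (\<lambda>t. vsub t k)"
     "(\<lambda>s. m0 (vsub s)) integrable_on {0..b}" "lam integrable_on {0..b}"
     "\<forall>t\<in>{0<..<b}-Cs. isCont (\<lambda>s. m0 (vsub s) + lam s) t"
     "\<forall>k t. 1 \<le> k \<longrightarrow> t \<in> {0<..<b}-Cs \<longrightarrow>
          ((\<lambda>s. vsub s k) has_real_derivative (coag (vsub t) k - real k * vsub t k * (m0 (vsub t) + lam t))) (at t)"
    using sub_sol_props[OF assms(6) assms(4) b(1)] by blast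
  define \<mu>c where "\<mu>c = (\<lambda>s. m0 (vcrit s) + (0::real))"
  define \<mu>s where "\<mu>s = (\<lambda>s. m0 (vsub s) + lam s)"
  have ic: "\<mu>c integrable_on {0..b}" unfolding \<mu>c_def by (intro integrable_add Cc(3) Cc(4))
  have iS: "\<mu>s integrable_on {0..b}" unfolding \<mu>s_def by (intro integrable_add Cs(3) Cs(4))
  have icT: "\<mu>c integrable_on {0..t}" if "t \<le> b" for t by (rule integrable_on_subinterval[OF ic]) (use that in auto)
  have isT: "\<mu>s integrable_on {0..t}" if "t \<le> b" for t by (rule integrable_on_subinterval[OF iS]) (use that in auto)
  have rel1: "vsub t k * exp (real k * integral {0..t} \<mu>s) = vcrit t k * exp (real k * integral {0..t} \<mu>c)"
    if "1 \<le> k" "t \<in> {0..b}" for k t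
  proof (rule rel_sols[OF b(2) Cs(1) Cc(1) _ iS _ _ _ ic _ _ _ that])
    show "\<And>k. 1 \<le> k \<Longrightarrow> continuous_on {0..b} (\<lambda>t. vsub t k)" using Cs(2) by blast
    show "\<And>t. t \<in> {0<..<b} - Cs \<Longrightarrow> isCont \<mu>s t" using Cs(5) unfolding \<mu>s_def by blast
    show "\<And>k t. 1 \<le> k \<Longrightarrow> t \<in> {0<..<b} - Cs \<Longrightarrow>
       ((\<lambda>s. vsub s k) has_real_derivative (coag (vsub t) k - real k * vsub t k * \<mu>s t)) (at t)"
      using Cs(6) unfolding \<mu>s_def by blast
    show "\<And>k. 1 \<le> k \<Longrightarrow> continuous_on {0..b} (\<lambda>t. vcrit t k)" using Cc(2) by blast
    show "\<And>t. t \<in> {0<..<b} - Cc \<Longrightarrow> isCont \<mu>c t" using Cc(5) unfolding \<mu>c_def by blast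
    show "\<And>k t. 1 \<le> k \<Longrightarrow> t \<in> {0<..<b} - Cc \<Longrightarrow>
       ((\<lambda>s. vcrit s k) has_real_derivative (coag (vcrit t) k - real k * vcrit t k * \<mu>c t)) (at t)"
      using Cc(6) unfolding \<mu>c_def by blast
    show "vsub 0 = vcrit 0" using vs0 vc0 by simp
  qed
  have g1: "0 \<le> integral {0..T} (\<lambda>s. \<mu>s s - \<mu>c s)"
  proof (rule compare_D)
    show "0 \<le> T" using T by simp
    show "(\<lambda>s. \<mu>s s - \<mu>c s) integrable_on {0..T}" using isT icT b by (intro integrable_diff) auto
    fix s assume s: "s \<in> {0<..T}" and D: "integral {0..s} (\<lambda>s. \<mu>s s - \<mu>c s) \<le> 0"
    have sb: "s \<le> b" "0 \<le> s" using s b by auto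
    have int_le: "integral {0..s} \<mu>s \<le> integral {0..s} \<mu>c"
      using D integral_diff[OF isT[OF sb(1)] icT[OF sb(1)]] by simp
    have sI: "s \<in> {0..b}" using sb by simp
    have "vcrit s k \<le> vsub s k" if "1 \<le> k" for k
      by (rule ge_from_rel[OF rel1[OF that sI] int_le]) (use sb inNc that in \<open>auto simp: in_N_def\<close>)
    hence "m0 (vcrit s) \<le> m0 (vsub s)" using inNc inNs sb by (intro m0_le) auto
    moreover have "0 \<le> lam s" using c0 sb by (metis less_le_trans less_imp_le)
    ultimately show "0 \<le> \<mu>s s - \<mu>c s" unfolding \<mu>s_def \<mu>c_def by simp
  qed
  have imcT: "(\<lambda>s. m0 (vcrit s)) integrable_on {0..T}" by (rule integrable_on_subinterval[OF Cc(3)]) (use b in auto)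
  have imsT: "(\<lambda>s. m0 (vsub s)) integrable_on {0..T}" by (rule integrable_on_subinterval[OF Cs(3)]) (use b in auto)
  have ilT: "lam integrable_on {0..T}" by (rule integrable_on_subinterval[OF Cs(4)]) (use b in auto)
  have iK: "(\<lambda>_. m0 v0) integrable_on {0..T}" by (rule integrable_const_ivl)
  have Phic: "Phi vcrit = (\<lambda>t. m0 v0 - m0 (vcrit t))" by (rule ext) (simp add: Phi_def vc0)
  have Phis: "Phi vsub = (\<lambda>t. m0 v0 - m0 (vsub t))" by (rule ext) (simp add: Phi_def vs0)
  have intc: "integral {0..T} (Phi vcrit) = integral {0..T} (\<lambda>_. m0 v0) - integral {0..T} (\<lambda>s. m0 (vcrit s))"
    unfolding Phic by (rule integral_diff[OF iK imcT])
  have ints: "integral {0..T} (Phi vsub) = integral {0..T} (\<lambda>_. m0 v0) - integral {0..T} (\<lambda>s. m0 (vsub s))"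
    unfolding Phis by (rule integral_diff[OF iK imsT])
  have intmuc: "integral {0..T} \<mu>c = integral {0..T} (\<lambda>s. m0 (vcrit s))" unfolding \<mu>c_def by simp
  have "integral {0..T} (\<lambda>s. \<mu>s s - \<mu>c s) = integral {0..T} \<mu>s - integral {0..T} \<mu>c"
    by (rule integral_diff[OF isT icT]) (use b in auto)
  also have "integral {0..T} \<mu>s = integral {0..T} (\<lambda>s. m0 (vsub s)) + integral {0..T} lam"
    unfolding \<mu>s_def by (rule integral_add[OF imsT ilT])
  finally have P1: "integral {0..T} (Phi vsub) - integral {0..T} lam \<le> integral {0..T} (Phi vcrit)"
    using g1 intc ints intmuc by simp
  have P2: "integral {0..T} (Phi_alt \<beta> valt) \<le> integral {0..T} (Phi vcrit)"
    if bt: "burning_times \<beta>" and asol: "alt_sol \<beta> v0 valt" for \<beta> valt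
  proof -
    have va0: "valt 0 = v0" using asol unfolding alt_sol_def by blast
    have inNa: "\<forall>t\<ge>0. in_N (valt t)" using asol unfolding alt_sol_def by blast
    have conta: "\<forall>k\<ge>1. continuous_on {0..} (\<lambda>t. valt t k)" using asol unfolding alt_sol_def by blast
    have dera: "\<forall>k\<ge>1. \<forall>t>0. t \<notin> range \<beta> \<longrightarrow>
        ((\<lambda>s. valt s k) has_real_derivative
           (coag (valt t) k - real k * valt t k * m0 (valt (\<beta> (Mt \<beta> t))))) (at t)"
      using asol unfolding alt_sol_def by blast
    define \<mu>a where "\<mu>a = (\<lambda>s. m0 (valt (\<beta> (Mt \<beta> s))))"
    have ia: "\<mu>a integrable_on {0..b}" unfolding \<mu>a_def by (rule alt_c_int[OF bt])
    have iaT: "\<mu>a integrable_on {0..t}" if "t \<le> b" for t by (rule integrable_on_subinterval[OF ia]) (use that in auto)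
    have cR: "countable (range \<beta>)" by (rule countable_image) simp
    have rel2: "valt t k * exp (real k * integral {0..t} \<mu>a) = vcrit t k * exp (real k * integral {0..t} \<mu>c)"
      if "1 \<le> k" "t \<in> {0..b}" for k t
    proof (rule rel_sols[OF b(2) cR Cc(1) _ ia _ _ _ ic _ _ _ that])
      show "\<And>k. 1 \<le> k \<Longrightarrow> continuous_on {0..b} (\<lambda>t. valt t k)"
        using conta by (auto intro: continuous_on_subset)
      show "\<And>t. t \<in> {0<..<b} - range \<beta> \<Longrightarrow> isCont \<mu>a t" unfolding \<mu>a_def
        by (rule alt_c_cont[OF bt]) auto
      show "\<And>k t. 1 \<le> k \<Longrightarrow> t \<in> {0<..<b} - range \<beta> \<Longrightarrow>
         ((\<lambda>s. valt s k) has_real_derivative (coag (valt t) k - real k * valt t k * \<mu>a t)) (at t)"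
        using dera unfolding \<mu>a_def by auto
      show "\<And>k. 1 \<le> k \<Longrightarrow> continuous_on {0..b} (\<lambda>t. vcrit t k)" using Cc(2) by blast
      show "\<And>t. t \<in> {0<..<b} - Cc \<Longrightarrow> isCont \<mu>c t" using Cc(5) unfolding \<mu>c_def by blast
      show "\<And>k t. 1 \<le> k \<Longrightarrow> t \<in> {0<..<b} - Cc \<Longrightarrow>
         ((\<lambda>s. vcrit s k) has_real_derivative (coag (vcrit t) k - real k * vcrit t k * \<mu>c t)) (at t)"
        using Cc(6) unfolding \<mu>c_def by blast
      show "valt 0 = vcrit 0" using va0 vc0 by simp
    qed
    have g2: "0 \<le> integral {0..T} (\<lambda>s. \<mu>a s - \<mu>c s)"
    proof (rule compare_D)
      show "0 \<le> T" using T by simp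
      show "(\<lambda>s. \<mu>a s - \<mu>c s) integrable_on {0..T}" using iaT icT b by (intro integrable_diff) auto
      fix s assume s: "s \<in> {0<..T}" and D: "integral {0..s} (\<lambda>s. \<mu>a s - \<mu>c s) \<le> 0"
      have sb: "s \<le> b" "0 \<le> s" "0 < s" using s b by auto
      have int_le: "integral {0..s} \<mu>a \<le> integral {0..s} \<mu>c"
        using D integral_diff[OF iaT[OF sb(1)] icT[OF sb(1)]] by simp
      have sI: "s \<in> {0..b}" using sb by simp
      have "vcrit s k \<le> valt s k" if "1 \<le> k" for k
        by (rule ge_from_rel[OF rel2[OF that sI] int_le]) (use sb inNc that in \<open>auto simp: in_N_def\<close>)
      hence "m0 (vcrit s) \<le> m0 (valt s)" using inNc inNa sb by (intro m0_le) auto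
      moreover have "m0 (valt s) \<le> \<mu>a s" unfolding \<mu>a_def by (rule alt_mono[OF bt asol sb(3)])
      ultimately show "0 \<le> \<mu>a s - \<mu>c s" unfolding \<mu>c_def by simp
    qed
    have Phia: "Phi_alt \<beta> valt = (\<lambda>t. m0 v0 - \<mu>a t)" by (rule ext) (simp add: Phi_alt_def va0 \<mu>a_def)
    have inta: "integral {0..T} (Phi_alt \<beta> valt) = integral {0..T} (\<lambda>_. m0 v0) - integral {0..T} \<mu>a"
      unfolding Phia by (rule integral_diff[OF iK iaT]) (use b in auto)
    have "integral {0..T} (\<lambda>s. \<mu>a s - \<mu>c s) = integral {0..T} \<mu>a - integral {0..T} \<mu>c"
      by (rule integral_diff[OF iaT icT]) (use b in auto)
    thus ?thesis using g2 inta intc intmuc by simp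
  qed
  show ?thesis using P1 P2 by blast
qed

end
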